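(* Let $S$ be a commutative Hausdorff semitopological semigroup. Then $S^{Lmc}$ is not commutative if and only if there exist unbounded sequences $(x_n)$ and $(y_n)$ in $S$ such that $$\mathrm{cl}_{S^{Lmc}}\varepsilon(\{x_ky_n:k<n,\ k,n\in\mathbb{N}\})\cap\mathrm{cl}_{S^{Lmc}}\varepsilon(\{y_kx_n:k<n,\ k,n\in\mathbb{N}\})=\emptyset.$$
   Context: A Hausdorff semitopological semigroup is a semigroup $S$ with a Hausdorff topology such that all maps $\lambda_s(x)=sx$, $r_s(x)=xs$ are continuous. $\mathcal{CB}(S)$: bounded continuous complex functions with sup norm; $\beta S$ its spectrum with Gelfand topology; $L_sf(x)=f(sx)$, $(T_\mu f)(s)=\mu(L_sf)$; $Lmc(S)=\{f\in\mathcal{CB}(S):T_\mu f\in\mathcal{CB}(S)\ \forall \mu\in\beta S\}$. $S^{Lmc}$ is the spectrum of $Lmc(S)$ with the Gelfand topology and multiplication $\mu\nu=\mu\circ T_\nu$, where $(T_\nu f)(s)=\nu(L_sf)$ for $f\in Lmc(S)$; $\varepsilon:S\to S^{Lmc}$ is evaluation, $\varepsilon(s)(f)=f(s)$. $S^*=S^{Lmc}\setminus\varepsilon(S)$. A set $A\subseteq S$ is unbounded if $\mathrm{cl}_{S^{Lmc}}\varepsilon(A)\cap S^*\neq\emptyset$; a sequence $(x_n)$ is unbounded if $\{x_n:n\in\mathbb{N}\}$ is unbounded. *)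

theory Defs
  imports "HOL-Analysis.Analysis"
begin

definition CB :: "('a::topological_space \<Rightarrow> complex) set" where
  "CB = {f. continuous_on UNIV f \<and> bounded (range f)}"

definition is_character :: "('a \<Rightarrow> complex) set \<Rightarrow> (('a \<Rightarrow> complex) \<Rightarrow> complex) \<Rightarrow> bool" where
  "is_character A \<mu> \<longleftrightarrow>
     (\<forall>f\<in>A. \<forall>g\<in>A. \<mu> (\<lambda>x. f x + g x) = \<mu> f + \<mu> g \<and> \<mu> (\<lambda>x. f x * g x) = \<mu> f * \<mu> g) \<and>
     (\<forall>c. \<forall>f\<in>A. \<mu> (\<lambda>x. c * f x) = c * \<mu> f) \<and>
     (\<exists>f\<in>A. \<mu> f \<noteq> 0)"

definition betaS :: "(('a::topological_space \<Rightarrow> complex) \<Rightarrow> complex) set" where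
  "betaS = {\<mu>. is_character CB \<mu>}"

definition Ltr :: "'a::semigroup_mult \<Rightarrow> ('a \<Rightarrow> complex) \<Rightarrow> ('a \<Rightarrow> complex)" where
  "Ltr s f = (\<lambda>x. f (s * x))"

definition Tmu :: "(('a::semigroup_mult \<Rightarrow> complex) \<Rightarrow> complex) \<Rightarrow> ('a \<Rightarrow> complex) \<Rightarrow> ('a \<Rightarrow> complex)" where
  "Tmu \<mu> f = (\<lambda>s. \<mu> (Ltr s f))"

definition Lmc :: "('a::{topological_space, semigroup_mult} \<Rightarrow> complex) set" where
  "Lmc = {f \<in> CB. \<forall>\<mu>\<in>betaS. Tmu \<mu> f \<in> CB}"

definition SLmc :: "(('a::{topological_space, semigroup_mult} \<Rightarrow> complex) \<Rightarrow> complex) set" where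
  "SLmc = {\<mu> \<in> extensional Lmc. is_character Lmc \<mu>}"

text \<open>Gelfand (weak-star) topology: pointwise convergence on Lmc(S).\<close>
definition SLmc_top :: "(('a::{topological_space, semigroup_mult} \<Rightarrow> complex) \<Rightarrow> complex) topology" where
  "SLmc_top = subtopology (product_topology (\<lambda>_. euclidean) Lmc) SLmc"

definition lmc_mult :: "(('a::{topological_space, semigroup_mult} \<Rightarrow> complex) \<Rightarrow> complex)
    \<Rightarrow> (('a \<Rightarrow> complex) \<Rightarrow> complex) \<Rightarrow> (('a \<Rightarrow> complex) \<Rightarrow> complex)" where
  "lmc_mult \<mu> \<nu> = restrict (\<lambda>f. \<mu> (Tmu \<nu> f)) Lmc"

definition evl :: "'a::{topological_space, semigroup_mult} \<Rightarrow> (('a \<Rightarrow> complex) \<Rightarrow> complex)" where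
  "evl s = restrict (\<lambda>f. f s) Lmc"

definition Sstar :: "(('a::{topological_space, semigroup_mult} \<Rightarrow> complex) \<Rightarrow> complex) set" where
  "Sstar = SLmc - range evl"

definition lmc_closure :: "'a::{topological_space, semigroup_mult} set \<Rightarrow> (('a \<Rightarrow> complex) \<Rightarrow> complex) set" where
  "lmc_closure A = SLmc_top closure_of (evl ` A)"

definition unbounded_set :: "'a::{topological_space, semigroup_mult} set \<Rightarrow> bool" where
  "unbounded_set A \<longleftrightarrow> lmc_closure A \<inter> Sstar \<noteq> {}"

definition unbounded_seq :: "(nat \<Rightarrow> 'a::{topological_space, semigroup_mult}) \<Rightarrow> bool" where
  "unbounded_seq x \<longleftrightarrow> unbounded_set (range x)"

definition SLmc_commutative :: "'a::{topological_space, semigroup_mult} itself \<Rightarrow> bool" where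
  "SLmc_commutative _ \<longleftrightarrow>
     (\<forall>\<mu>\<in>(SLmc :: (('a \<Rightarrow> complex) \<Rightarrow> complex) set). \<forall>\<nu>\<in>SLmc. lmc_mult \<mu> \<nu> = lmc_mult \<nu> \<mu>)"

end

theory Submission
  imports Defs
begin

definition alg :: "('a::topological_space \<Rightarrow> complex) set \<Rightarrow> bool" where
  "alg A \<longleftrightarrow> A \<subseteq> CB \<and> (\<lambda>x. 1) \<in> A \<and>
     (\<forall>f\<in>A. \<forall>g\<in>A. (\<lambda>x. f x + g x) \<in> A \<and> (\<lambda>x. f x * g x) \<in> A) \<and>
     (\<forall>c. \<forall>f\<in>A. (\<lambda>x. c * f x) \<in> A) \<and>
     (\<forall>f\<in>A. (\<lambda>x. cnj (f x)) \<in> A) \<and>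
     (\<forall>f\<in>A. \<forall>e>0. (\<forall>x. e \<le> cmod (f x)) \<longrightarrow> (\<lambda>x. inverse (f x)) \<in> A)"

lemma CB_bounded: "f \<in> CB \<Longrightarrow> \<exists>B. \<forall>x. cmod (f x) \<le> B"
  unfolding CB_def by (auto simp: bounded_iff)

lemma CB_cont: "f \<in> CB \<Longrightarrow> continuous_on UNIV f"
  unfolding CB_def by auto

lemma CB_I: "continuous_on UNIV f \<Longrightarrow> (\<And>x. cmod (f x) \<le> B) \<Longrightarrow> f \<in> CB"
  unfolding CB_def by (auto simp: bounded_iff)

lemma alg_CB: "alg (CB :: ('a::topological_space \<Rightarrow> complex) set)"
  unfolding alg_def
proof (intro conjI ballI allI impI)
  show "(\<lambda>x. 1) \<in> (CB :: ('a \<Rightarrow> complex) set)"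
    by (rule CB_I[where B=1]) (auto intro: continuous_intros)
next
  fix f g :: "'a \<Rightarrow> complex" assume f: "f \<in> CB" and g: "g \<in> CB"
  obtain Bf where Bf: "\<And>x. cmod (f x) \<le> Bf" using CB_bounded[OF f] by auto
  obtain Bg where Bg: "\<And>x. cmod (g x) \<le> Bg" using CB_bounded[OF g] by auto
  show "(\<lambda>x. f x + g x) \<in> CB"
    apply (rule CB_I[where B="Bf+Bg"])
     apply (intro continuous_intros CB_cont f g)
    by (meson Bf Bg add_mono norm_triangle_ineq order_trans)
  show "(\<lambda>x. f x * g x) \<in> CB"
    apply (rule CB_I[where B="Bf*Bg"])
     apply (intro continuous_intros CB_cont f g)
    by (simp add: norm_mult Bf Bg mult_mono')
next
  fix c and f :: "'a \<Rightarrow> complex" assume f: "f \<in> CB"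
  obtain Bf where Bf: "\<And>x. cmod (f x) \<le> Bf" using CB_bounded[OF f] by auto
  show "(\<lambda>x. c * f x) \<in> CB"
    apply (rule CB_I[where B="cmod c*Bf"])
     apply (intro continuous_intros CB_cont f)
    by (simp add: norm_mult Bf mult_left_mono)
next
  fix f :: "'a \<Rightarrow> complex" assume f: "f \<in> CB"
  obtain Bf where Bf: "\<And>x. cmod (f x) \<le> Bf" using CB_bounded[OF f] by auto
  show "(\<lambda>x. cnj (f x)) \<in> CB"
    apply (rule CB_I[where B="Bf"])
     apply (intro continuous_intros CB_cont f)
    by (simp add: Bf)
next
  fix f :: "'a \<Rightarrow> complex" and e :: real assume f: "f \<in> CB" and e: "0 < e" and fe: "\<forall>x. e \<le> cmod (f x)"
  have nz: "f x \<noteq> 0" for x using e fe by (metis norm_zero not_le)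
  show "(\<lambda>x. inverse (f x)) \<in> CB"
    apply (rule CB_I[where B="inverse e"])
     apply (intro continuous_intros CB_cont f)
    using nz apply blast
    using fe e by (simp add: norm_inverse le_imp_inverse_le)
qed simp

locale algA =
  fixes A :: "('a::topological_space \<Rightarrow> complex) set"
  assumes alg: "alg A"
begin
lemma A_one: "(\<lambda>x. 1) \<in> A" using alg unfolding alg_def by blast
lemma A_add: "f \<in> A \<Longrightarrow> g \<in> A \<Longrightarrow> (\<lambda>x. f x + g x) \<in> A" using alg unfolding alg_def by blast
lemma A_mult: "f \<in> A \<Longrightarrow> g \<in> A \<Longrightarrow> (\<lambda>x. f x * g x) \<in> A" using alg unfolding alg_def by blast
lemma A_smult: "f \<in> A \<Longrightarrow> (\<lambda>x. c * f x) \<in> A" using alg unfolding alg_def by blast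
lemma A_cnj: "f \<in> A \<Longrightarrow> (\<lambda>x. cnj (f x)) \<in> A" using alg unfolding alg_def by blast
lemma A_inv: "f \<in> A \<Longrightarrow> 0 < e \<Longrightarrow> (\<And>x. e \<le> cmod (f x)) \<Longrightarrow> (\<lambda>x. inverse (f x)) \<in> A"
  using alg unfolding alg_def by blast
lemma A_CB: "f \<in> A \<Longrightarrow> f \<in> CB" using alg unfolding alg_def by blast

lemma A_const: "(\<lambda>x. c) \<in> A"
  using A_smult[OF A_one, of c] by simp

lemma A_diffc: "f \<in> A \<Longrightarrow> (\<lambda>x. f x - c) \<in> A"
  using A_add[OF _ A_const, of f "-c"] by simp

end

locale chA = algA +
  fixes \<phi>
  assumes ch: "is_character A \<phi>"
begin

lemma ch_add: "f \<in> A \<Longrightarrow> g \<in> A \<Longrightarrow> \<phi> (\<lambda>x. f x + g x) = \<phi> f + \<phi> g"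
  using ch unfolding is_character_def by blast
lemma ch_mult: "f \<in> A \<Longrightarrow> g \<in> A \<Longrightarrow> \<phi> (\<lambda>x. f x * g x) = \<phi> f * \<phi> g"
  using ch unfolding is_character_def by blast
lemma ch_smult: "f \<in> A \<Longrightarrow> \<phi> (\<lambda>x. c * f x) = c * \<phi> f"
  using ch unfolding is_character_def by blast

lemma ch_one: "\<phi> (\<lambda>x. 1) = 1"
proof -
  obtain f where f: "f \<in> A" "\<phi> f \<noteq> 0" using ch unfolding is_character_def by blast
  have "\<phi> (\<lambda>x. 1 * f x) = \<phi> (\<lambda>x. 1) * \<phi> f" using ch_mult[OF A_one f(1)] .
  then show ?thesis using f by simp
qed

lemma ch_const: "\<phi> (\<lambda>x. c) = c"
  using ch_smult[OF A_one, of c] ch_one by simp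

lemma ch_diffc: "f \<in> A \<Longrightarrow> \<phi> (\<lambda>x. f x - c) = \<phi> f - c"
  using ch_add[OF _ A_const, of f "-c"] ch_const[of "-c"] by simp

lemma ch_approx1: assumes f: "f \<in> A" and e: "0 < e" shows "\<exists>x. cmod (f x - \<phi> f) < e"
proof (rule ccontr)
  assume "\<not> ?thesis"
  then have fe: "\<And>x. e \<le> cmod (f x - \<phi> f)" by (simp add: not_less)
  define g where "g = (\<lambda>x. f x - \<phi> f)"
  have gA: "g \<in> A" unfolding g_def by (rule A_diffc[OF f])
  have iA: "(\<lambda>x. inverse (g x)) \<in> A" using A_inv[OF gA e] fe unfolding g_def by auto
  have nz: "g x \<noteq> 0" for x using fe e unfolding g_def by (metis norm_zero not_le)
  have "(\<lambda>x. g x * inverse (g x)) = (\<lambda>x. 1)" using nz by auto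
  then have "\<phi> (\<lambda>x. 1) = \<phi> g * \<phi> (\<lambda>x. inverse (g x))" using ch_mult[OF gA iA] by simp
  moreover have "\<phi> g = 0" unfolding g_def using ch_diffc[OF f] by simp
  ultimately show False using ch_one by simp
qed

lemma ch_bound: assumes f: "f \<in> A" and B: "\<And>x. cmod (f x) \<le> B" shows "cmod (\<phi> f) \<le> B"
proof (rule ccontr)
  assume "\<not> ?thesis"
  then have "0 < cmod (\<phi> f) - B" by simp
  from ch_approx1[OF f this] obtain x where "cmod (f x - \<phi> f) < cmod (\<phi> f) - B" by blast
  moreover have "cmod (\<phi> f) \<le> cmod (f x) + cmod (f x - \<phi> f)"
    using norm_triangle_sub[of "\<phi> f" "f x"] by (simp add: norm_minus_commute)
  ultimately show False using B[of x] by simp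
qed

lemma ch_real: assumes f: "f \<in> A" and r: "\<And>x. Im (f x) = 0" shows "Im (\<phi> f) = 0"
proof (rule ccontr)
  assume "Im (\<phi> f) \<noteq> 0"
  then have "0 < \<bar>Im (\<phi> f)\<bar>" by simp
  from ch_approx1[OF f this] obtain x where x: "cmod (f x - \<phi> f) < \<bar>Im (\<phi> f)\<bar>" by blast
  have "\<bar>Im (f x - \<phi> f)\<bar> \<le> cmod (f x - \<phi> f)" by (rule abs_Im_le_cmod)
  then show False using x r[of x] by simp
qed

lemma ch_cnj: assumes f: "f \<in> A" shows "\<phi> (\<lambda>x. cnj (f x)) = cnj (\<phi> f)"
proof -
  define u where "u = (\<lambda>x. (1/2) * (f x + cnj (f x)))"
  define v where "v = (\<lambda>x. (-\<i>/2) * (f x + (-1) * cnj (f x)))"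
  have cA: "(\<lambda>x. cnj (f x)) \<in> A" by (rule A_cnj[OF f])
  have uA: "u \<in> A" unfolding u_def by (intro A_smult A_add f cA)
  have vA: "v \<in> A" unfolding v_def by (intro A_smult A_add f cA)
  have ur: "Im (u x) = 0" for x unfolding u_def by simp
  have vr: "Im (v x) = 0" for x unfolding v_def by (simp add: algebra_simps)
  have f_eq: "f = (\<lambda>x. u x + \<i> * v x)"
    unfolding u_def v_def by (rule ext) (simp add: complex_eq_iff algebra_simps)
  have c_eq: "(\<lambda>x. cnj (f x)) = (\<lambda>x. u x + (-\<i>) * v x)"
    unfolding u_def v_def by (rule ext) (simp add: complex_eq_iff algebra_simps)
  have "\<phi> f = \<phi> u + \<i> * \<phi> v"
    by (subst f_eq, simp add: ch_add[OF uA A_smult[OF vA]] ch_smult[OF vA])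
  moreover have "\<phi> (\<lambda>x. cnj (f x)) = \<phi> u + (-\<i>) * \<phi> v"
    by (subst c_eq, simp only: ch_add[OF uA A_smult[OF vA]] ch_smult[OF vA])
  moreover have "Im (\<phi> u) = 0" "Im (\<phi> v) = 0" using ch_real[OF uA ur] ch_real[OF vA vr] by auto
  ultimately show ?thesis by (simp add: complex_eq_iff)
qed

lemma ch_sum: "finite G \<Longrightarrow> (\<And>g. g \<in> G \<Longrightarrow> F g \<in> A) \<Longrightarrow>
   (\<lambda>x. \<Sum>g\<in>G. F g x) \<in> A \<and> \<phi> (\<lambda>x. \<Sum>g\<in>G. F g x) = (\<Sum>g\<in>G. \<phi> (F g))"
proof (induction G rule: finite_induct)
  case empty
  then show ?case using A_const[of 0] ch_const[of 0] by simp
next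
  case (insert g G)
  then have IH: "(\<lambda>x. \<Sum>g\<in>G. F g x) \<in> A" "\<phi> (\<lambda>x. \<Sum>g\<in>G. F g x) = (\<Sum>g\<in>G. \<phi> (F g))" by auto
  have Fg: "F g \<in> A" using insert by auto
  show ?case using insert(1,2) A_add[OF Fg IH(1)] ch_add[OF Fg IH(1)] IH(2) by simp
qed

lemma ch_approx: assumes G: "finite G" "G \<subseteq> A" and e: "0 < e"
  shows "\<exists>x. \<forall>g\<in>G. cmod (g x - \<phi> g) < e"
proof -
  define F where "F = (\<lambda>g x. (g x - \<phi> g) * cnj (g x - \<phi> g))"
  have FA: "F g \<in> A" if "g \<in> G" for g
    unfolding F_def using that G by (intro A_mult A_cnj A_diffc) auto
  have F0: "\<phi> (F g) = 0" if "g \<in> G" for g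
  proof -
    have gA: "g \<in> A" using that G by auto
    have "\<phi> (F g) = \<phi> (\<lambda>x. g x - \<phi> g) * \<phi> (\<lambda>x. cnj (g x - \<phi> g))"
      unfolding F_def by (rule ch_mult) (intro A_diffc A_cnj gA)+
    then show ?thesis using ch_diffc[OF gA] by simp
  qed
  from ch_sum[OF G(1), of F] FA F0 have hA: "(\<lambda>x. \<Sum>g\<in>G. F g x) \<in> A" and h0: "\<phi> (\<lambda>x. \<Sum>g\<in>G. F g x) = 0"
    by auto
  have "0 < e^2" using e by simp
  from ch_approx1[OF hA this] h0 obtain x where x: "cmod (\<Sum>g\<in>G. F g x) < e^2" by auto
  have Fx: "F g x = of_real ((cmod (g x - \<phi> g))^2)" for g
    unfolding F_def by (rule complex_norm_square[symmetric])
  define R where "R = (\<Sum>g\<in>G. (cmod (g x - \<phi> g))^2)"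
  have eq: "(\<Sum>g\<in>G. F g x) = of_real R" unfolding R_def by (simp add: Fx)
  have "R \<ge> 0" unfolding R_def by (simp add: sum_nonneg)
  then have S: "(\<Sum>g\<in>G. (cmod (g x - \<phi> g))^2) < e^2" using x unfolding eq R_def[symmetric] by simp
  show ?thesis
  proof (intro exI ballI)
    fix g assume g: "g \<in> G"
    have "(cmod (g x - \<phi> g))^2 \<le> (\<Sum>g\<in>G. (cmod (g x - \<phi> g))^2)"
      by (rule member_le_sum[OF g]) (auto simp: G)
    then have "(cmod (g x - \<phi> g))^2 < e^2" using S by simp
    then show "cmod (g x - \<phi> g) < e" using e by (simp add: power_less_imp_less_base)
  qed
qed

end

lemma chI: "alg A \<Longrightarrow> is_character A \<phi> \<Longrightarrow> chA A \<phi>"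
  by (simp add: chA_def chA_axioms_def algA_def)

lemma algI: "alg A \<Longrightarrow> algA A"
  by (simp add: algA_def)

lemmas CB_one = algA.A_one[OF algI[OF alg_CB]]
lemmas CB_add = algA.A_add[OF algI[OF alg_CB]]
lemmas CB_mult = algA.A_mult[OF algI[OF alg_CB]]
lemmas CB_smult = algA.A_smult[OF algI[OF alg_CB]]
lemmas CB_cnj = algA.A_cnj[OF algI[OF alg_CB]]
lemmas CB_inv = algA.A_inv[OF algI[OF alg_CB]]
lemmas CB_const = algA.A_const[OF algI[OF alg_CB]]

lemma Ltr_Ltr: "Ltr x (Ltr t f) = Ltr (t * x) f"
  unfolding Ltr_def by (simp add: mult.assoc)

lemma Ltr_CB:
  assumes lc: "\<And>s::'a::{topological_space,semigroup_mult}. continuous_on UNIV (\<lambda>x. s * x)"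
    and f: "(f :: 'a \<Rightarrow> complex) \<in> CB" shows "Ltr s f \<in> CB"
proof -
  obtain B where B: "\<And>x. cmod (f x) \<le> B" using CB_bounded[OF f] by auto
  have "continuous_on UNIV (f \<circ> (\<lambda>x. s * x))"
    by (rule continuous_on_compose[OF lc]) (use CB_cont[OF f] continuous_on_subset in blast)
  then show ?thesis unfolding Ltr_def by (intro CB_I[where B=B]) (auto simp: o_def B)
qed

lemma betaS_ch: "\<mu> \<in> betaS \<Longrightarrow> is_character CB \<mu>"
  unfolding betaS_def by simp

lemma beta_chA: "\<mu> \<in> betaS \<Longrightarrow> chA CB \<mu>"
  by (rule chI[OF alg_CB betaS_ch])

lemma Tmu_add: "Tmu \<nu> (\<lambda>x. f x + g x) s = \<nu> (\<lambda>x. Ltr s f x + Ltr s g x)"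
  unfolding Tmu_def Ltr_def by simp
lemma Tmu_mult: "Tmu \<nu> (\<lambda>x. f x * g x) s = \<nu> (\<lambda>x. Ltr s f x * Ltr s g x)"
  unfolding Tmu_def Ltr_def by simp
lemma Tmu_smult: "Tmu \<nu> (\<lambda>x. c * f x) s = \<nu> (\<lambda>x. c * Ltr s f x)"
  unfolding Tmu_def Ltr_def by simp
lemma Tmu_cnj: "Tmu \<nu> (\<lambda>x. cnj (f x)) s = \<nu> (\<lambda>x. cnj (Ltr s f x))"
  unfolding Tmu_def Ltr_def by simp
lemma Tmu_inv: "Tmu \<nu> (\<lambda>x. inverse (f x)) s = \<nu> (\<lambda>x. inverse (Ltr s f x))"
  unfolding Tmu_def Ltr_def by simp
lemma Tmu_const: "Tmu \<nu> (\<lambda>x. c) s = \<nu> (\<lambda>x. c)"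
  unfolding Tmu_def Ltr_def by simp

lemma Lmc_CB: "f \<in> Lmc \<Longrightarrow> f \<in> CB" unfolding Lmc_def by simp
lemma Lmc_T: "f \<in> Lmc \<Longrightarrow> \<mu> \<in> betaS \<Longrightarrow> Tmu \<mu> f \<in> CB" unfolding Lmc_def by simp

lemma alg_Lmc:
  assumes lc: "\<And>s::'a::{topological_space,semigroup_mult}. continuous_on UNIV (\<lambda>x. s * x)"
  shows "alg (Lmc :: ('a \<Rightarrow> complex) set)"
  unfolding alg_def
proof (intro conjI ballI allI impI)
  show "Lmc \<subseteq> (CB :: ('a \<Rightarrow> complex) set)" by (auto simp: Lmc_def)
  show "(\<lambda>x. 1) \<in> (Lmc :: ('a \<Rightarrow> complex) set)"
    unfolding Lmc_def
  proof (intro CollectI conjI ballI)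
    show "(\<lambda>x. 1) \<in> (CB :: ('a \<Rightarrow> complex) set)" by (rule CB_one)
    fix \<mu> :: "('a \<Rightarrow> complex) \<Rightarrow> complex" assume m: "\<mu> \<in> betaS"
    have "Tmu \<mu> (\<lambda>x. 1) = (\<lambda>s. 1)" using chA.ch_one[OF beta_chA[OF m]] by (simp add: Tmu_const[abs_def])
    then show "Tmu \<mu> (\<lambda>x. 1) \<in> CB" using algA.A_one[OF algI[OF alg_CB[where 'a='a]]] by simp
  qed
next
  fix f g :: "'a \<Rightarrow> complex" assume f: "f \<in> Lmc" and g: "g \<in> Lmc"
  note fC = Lmc_CB[OF f] and gC = Lmc_CB[OF g]
  show "(\<lambda>x. f x + g x) \<in> Lmc"
    unfolding Lmc_def
  proof (intro CollectI conjI ballI)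
    show "(\<lambda>x. f x + g x) \<in> CB" by (rule CB_add[OF fC gC])
    fix \<mu> :: "('a \<Rightarrow> complex) \<Rightarrow> complex" assume m: "\<mu> \<in> betaS"
    have "Tmu \<mu> (\<lambda>x. f x + g x) = (\<lambda>s. Tmu \<mu> f s + Tmu \<mu> g s)"
      by (rule ext, simp only: Tmu_add chA.ch_add[OF beta_chA[OF m] Ltr_CB[OF lc fC] Ltr_CB[OF lc gC]], simp add: Tmu_def)
    then show "Tmu \<mu> (\<lambda>x. f x + g x) \<in> CB" using CB_add[OF Lmc_T[OF f m] Lmc_T[OF g m]] by simp
  qed
  show "(\<lambda>x. f x * g x) \<in> Lmc"
    unfolding Lmc_def
  proof (intro CollectI conjI ballI)
    show "(\<lambda>x. f x * g x) \<in> CB" by (rule CB_mult[OF fC gC])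
    fix \<mu> :: "('a \<Rightarrow> complex) \<Rightarrow> complex" assume m: "\<mu> \<in> betaS"
    have "Tmu \<mu> (\<lambda>x. f x * g x) = (\<lambda>s. Tmu \<mu> f s * Tmu \<mu> g s)"
      by (rule ext, simp only: Tmu_mult chA.ch_mult[OF beta_chA[OF m] Ltr_CB[OF lc fC] Ltr_CB[OF lc gC]], simp add: Tmu_def)
    then show "Tmu \<mu> (\<lambda>x. f x * g x) \<in> CB" using CB_mult[OF Lmc_T[OF f m] Lmc_T[OF g m]] by simp
  qed
next
  fix c and f :: "'a \<Rightarrow> complex" assume f: "f \<in> Lmc"
  note fC = Lmc_CB[OF f]
  show "(\<lambda>x. c * f x) \<in> Lmc"
    unfolding Lmc_def
  proof (intro CollectI conjI ballI)
    show "(\<lambda>x. c * f x) \<in> CB" by (rule CB_smult[OF fC])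
    fix \<mu> :: "('a \<Rightarrow> complex) \<Rightarrow> complex" assume m: "\<mu> \<in> betaS"
    have "Tmu \<mu> (\<lambda>x. c * f x) = (\<lambda>s. c * Tmu \<mu> f s)"
      by (rule ext, simp only: Tmu_smult chA.ch_smult[OF beta_chA[OF m] Ltr_CB[OF lc fC]], simp add: Tmu_def)
    then show "Tmu \<mu> (\<lambda>x. c * f x) \<in> CB" using CB_smult[OF Lmc_T[OF f m]] by simp
  qed
next
  fix f :: "'a \<Rightarrow> complex" assume f: "f \<in> Lmc"
  note fC = Lmc_CB[OF f]
  show "(\<lambda>x. cnj (f x)) \<in> Lmc"
    unfolding Lmc_def
  proof (intro CollectI conjI ballI)
    show "(\<lambda>x. cnj (f x)) \<in> CB" by (rule CB_cnj[OF fC])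
    fix \<mu> :: "('a \<Rightarrow> complex) \<Rightarrow> complex" assume m: "\<mu> \<in> betaS"
    have "Tmu \<mu> (\<lambda>x. cnj (f x)) = (\<lambda>s. cnj (Tmu \<mu> f s))"
      by (rule ext, simp only: Tmu_cnj chA.ch_cnj[OF beta_chA[OF m] Ltr_CB[OF lc fC]], simp add: Tmu_def)
    then show "Tmu \<mu> (\<lambda>x. cnj (f x)) \<in> CB" using CB_cnj[OF Lmc_T[OF f m]] by simp
  qed
next
  fix f :: "'a \<Rightarrow> complex" and e :: real
  assume f: "f \<in> Lmc" and e: "0 < e" and fe: "\<forall>x. e \<le> cmod (f x)"
  note fC = Lmc_CB[OF f]
  show "(\<lambda>x. inverse (f x)) \<in> Lmc"
    unfolding Lmc_def
  proof (intro CollectI conjI ballI)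
    show "(\<lambda>x. inverse (f x)) \<in> CB" using CB_inv[OF fC e] fe by blast
    fix \<mu> :: "('a \<Rightarrow> complex) \<Rightarrow> complex" assume m: "\<mu> \<in> betaS"
    note chm = beta_chA[OF m]
    have T: "Tmu \<mu> (\<lambda>x. inverse (f x)) s = inverse (Tmu \<mu> f s) \<and> Tmu \<mu> f s \<noteq> 0
       \<and> cmod (Tmu \<mu> (\<lambda>x. inverse (f x)) s) \<le> inverse e" for s
    proof -
      have L: "Ltr s f \<in> CB" by (rule Ltr_CB[OF lc fC])
      have Le: "e \<le> cmod (Ltr s f x)" for x using fe by (simp add: Ltr_def)
      have I: "(\<lambda>x. inverse (Ltr s f x)) \<in> CB" using CB_inv[OF L e] Le by blast
      have nz: "Ltr s f x \<noteq> 0" for x using Le[of x] e by (metis norm_zero not_le)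
      have "(\<lambda>x. Ltr s f x * inverse (Ltr s f x)) = (\<lambda>x. 1)" using nz by auto
      then have one: "1 = \<mu> (Ltr s f) * \<mu> (\<lambda>x. inverse (Ltr s f x))"
        using chA.ch_mult[OF chm L I] chA.ch_one[OF chm] by simp
      have q: "Tmu \<mu> (\<lambda>x. inverse (f x)) s = \<mu> (\<lambda>x. inverse (Ltr s f x))" by (rule Tmu_inv)
      have p: "Tmu \<mu> f s = \<mu> (Ltr s f)" by (simp add: Tmu_def)
      have inv: "inverse (\<mu> (Ltr s f)) = \<mu> (\<lambda>x. inverse (Ltr s f x))"
        using inverse_unique[OF one[symmetric]] .
      have pnz: "\<mu> (Ltr s f) \<noteq> 0" using one by auto
      have "cmod (\<mu> (\<lambda>x. inverse (Ltr s f x))) \<le> inverse e"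
        by (rule chA.ch_bound[OF chm I]) (use Le e in \<open>simp add: norm_inverse le_imp_inverse_le\<close>)
      then show ?thesis using q p inv pnz by simp
    qed
    have "continuous_on UNIV (\<lambda>s. inverse (Tmu \<mu> f s))"
      using CB_cont[OF Lmc_T[OF f m]] T by (intro continuous_intros) auto
    then have "continuous_on UNIV (Tmu \<mu> (\<lambda>x. inverse (f x)))" using T by simp
    then show "Tmu \<mu> (\<lambda>x. inverse (f x)) \<in> CB" by (rule CB_I[where B="inverse e"]) (use T in blast)
  qed
qed

lemma Ltr_Lmc:
  assumes lc: "\<And>s::'a::{topological_space,semigroup_mult}. continuous_on UNIV (\<lambda>x. s * x)"
    and f: "(f :: 'a \<Rightarrow> complex) \<in> Lmc" shows "Ltr s f \<in> Lmc"
  unfolding Lmc_def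
proof (intro CollectI conjI ballI)
  show "Ltr s f \<in> CB" by (rule Ltr_CB[OF lc Lmc_CB[OF f]])
  fix \<mu> :: "('a \<Rightarrow> complex) \<Rightarrow> complex" assume m: "\<mu> \<in> betaS"
  have "Tmu \<mu> (Ltr s f) = Ltr s (Tmu \<mu> f)"
    unfolding Tmu_def by (rule ext) (simp add: Ltr_Ltr, simp add: Ltr_def)
  then show "Tmu \<mu> (Ltr s f) \<in> CB" using Ltr_CB[OF lc Lmc_T[OF f m]] by simp
qed

lemma zero_by_eps:
  assumes "\<And>e. 0 < e \<Longrightarrow> cmod z \<le> C * e" shows "z = 0"
proof (rule ccontr)
  assume z: "z \<noteq> 0"
  define e where "e = cmod z / (2 * (\<bar>C\<bar> + 1))"
  have e: "0 < e" using z unfolding e_def by (simp add: add_pos_nonneg)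
  have "C * e \<le> \<bar>C\<bar> * e" using e by (simp add: mult_right_mono)
  also have "\<dots> < (\<bar>C\<bar> + 1) * e * 2"
  proof -
    have "0 \<le> \<bar>C\<bar> * e" using e by simp
    moreover have "(\<bar>C\<bar> + 1) * e * 2 = \<bar>C\<bar> * e + (\<bar>C\<bar> * e + 2 * e)" by (simp add: algebra_simps)
    ultimately show ?thesis using e by linarith
  qed
  also have "\<dots> = cmod z" unfolding e_def by (simp add: field_simps)
  finally show False using assms[OF e] by simp
qed

lemma tri3: "cmod (a + b - c) \<le> cmod a + cmod b + cmod (c::complex)"
  using norm_triangle_ineq[of a b] norm_triangle_ineq4[of "a+b" c] by linarith

lemma dir_finite:
  assumes ne: "\<P> \<noteq> {}" and dir: "\<And>P Q. P \<in> \<P> \<Longrightarrow> Q \<in> \<P> \<Longrightarrow> \<exists>R\<in>\<P>. R \<subseteq> P \<inter> Q"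
  shows "finite \<F> \<Longrightarrow> \<F> \<subseteq> \<P> \<Longrightarrow> \<exists>R\<in>\<P>. R \<subseteq> \<Inter>\<F>"
proof (induction \<F> rule: finite_induct)
  case empty then show ?case using ne by auto
next
  case (insert P \<F>)
  then obtain R where R: "R \<in> \<P>" "R \<subseteq> \<Inter>\<F>" by auto
  obtain R' where "R' \<in> \<P>" "R' \<subseteq> P \<inter> R" using dir[of P R] R insert by auto
  then show ?case using R by auto
qed

lemma cluster_char:
  fixes A :: "('a::topological_space \<Rightarrow> complex) set"
  assumes alg: "alg A" and ne: "\<P> \<noteq> {}" and Pne: "\<And>P. P \<in> \<P> \<Longrightarrow> P \<noteq> {}"
    and dir: "\<And>P Q. P \<in> \<P> \<Longrightarrow> Q \<in> \<P> \<Longrightarrow> \<exists>R\<in>\<P>. R \<subseteq> P \<inter> Q"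
  shows "\<exists>l. l \<in> extensional A \<and> is_character A l \<and>
    (\<forall>P\<in>\<P>. \<forall>G e. finite G \<and> G \<subseteq> A \<and> 0 < e \<longrightarrow> (\<exists>s\<in>P. \<forall>g\<in>G. cmod (g s - l g) < e))"
proof -
  interpret algA A using alg by (rule algI)
  define X where "X = (\<lambda>g::'a \<Rightarrow> complex. subtopology euclidean (closure (range g)))"
  define K where "K = product_topology X A"
  define ev where "ev = (\<lambda>s::'a. restrict (\<lambda>g. g s) A)"
  define D where "D = (\<lambda>P. K closure_of (ev ` P))"
  have tK: "topspace K = PiE A (\<lambda>g. closure (range g))"
    unfolding K_def X_def by simp
  have evK: "ev s \<in> topspace K" for s
    unfolding tK ev_def by (auto intro: closure_subset[THEN subsetD])
  have cK: "compact_space K"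
    unfolding K_def
  proof (subst compact_space_product_topology, rule disjI2, intro ballI)
    fix g assume "g \<in> A"
    then have "bounded (range g)" using A_CB unfolding CB_def by auto
    then have "compact (closure (range g))" by (simp add: compact_closure)
    then show "compact_space (X g)" unfolding X_def by (intro compact_space_subtopology) simp
  qed
  have cl: "\<forall>C\<in>D ` \<P>. closedin K C" unfolding D_def by auto
  have fip: "\<forall>\<F>. finite \<F> \<and> \<F> \<subseteq> D ` \<P> \<longrightarrow> \<Inter>\<F> \<noteq> {}"
  proof (intro allI impI)
    fix \<F> assume F: "finite \<F> \<and> \<F> \<subseteq> D ` \<P>"
    then obtain \<P>' where P': "\<P>' \<subseteq> \<P>" "finite \<P>'" "\<F> = D ` \<P>'"
      by (meson finite_subset_image)
    obtain R where R: "R \<in> \<P>" "R \<subseteq> \<Inter>\<P>'" using dir_finite[OF ne dir P'(2,1)] by blast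
    have "D R \<subseteq> D P" if "P \<in> \<P>'" for P unfolding D_def using R that by (intro closure_of_mono image_mono) auto
    then have "D R \<subseteq> \<Inter>\<F>" unfolding P'(3) by auto
    moreover have "D R \<noteq> {}"
    proof -
      obtain s where "s \<in> R" using Pne[OF R(1)] by auto
      then have "ev s \<in> D R" unfolding D_def using evK by (intro closure_of_subset[THEN subsetD]) auto
      then show ?thesis by auto
    qed
    ultimately show "\<Inter>\<F> \<noteq> {}" by auto
  qed
  have "\<Inter>(D ` \<P>) \<noteq> {}" using cK[unfolded compact_space_fip] cl fip by blast
  then obtain l where lam: "\<And>P. P \<in> \<P> \<Longrightarrow> l \<in> D P" by auto
  obtain P0 where P0: "P0 \<in> \<P>" using ne by auto
  have lK: "l \<in> topspace K" using closure_of_subset_topspace[of K "ev ` P0"] lam[OF P0] unfolding D_def by blast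
  have clu: "\<exists>s\<in>P. \<forall>g\<in>G. cmod (g s - l g) < e"
    if P: "P \<in> \<P>" and G: "finite G" "G \<subseteq> A" and e: "0 < e" for P G e
  proof -
    define U where "U = {\<psi> \<in> topspace K. \<forall>g\<in>G. \<psi> g \<in> ball (l g) e}"
    have "openin K {\<psi> \<in> topspace K. \<forall>g\<in>G'. \<psi> g \<in> ball (l g) e}" if "finite G'" "G' \<subseteq> A" for G'
      using that
    proof (induction G' rule: finite_induct)
      case empty then show ?case by simp
    next
      case (insert g G')
      have gA: "g \<in> A" using insert by auto
      have "openin (X g) (ball (l g) e \<inter> closure (range g))"
        unfolding X_def openin_subtopology by auto
      then have o: "openin K {\<psi> \<in> topspace K. \<psi> g \<in> ball (l g) e \<inter> closure (range g)}"
        unfolding K_def by (intro openin_continuous_map_preimage[OF continuous_map_product_projection[OF gA]])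
      have "{\<psi> \<in> topspace K. \<forall>g\<in>insert g G'. \<psi> g \<in> ball (l g) e} =
         {\<psi> \<in> topspace K. \<forall>g\<in>G'. \<psi> g \<in> ball (l g) e} \<inter> {\<psi> \<in> topspace K. \<psi> g \<in> ball (l g) e \<inter> closure (range g)}"
        using gA unfolding tK by (auto simp: PiE_iff)
      then show ?case using insert o by (simp add: openin_Int)
    qed
    then have oU: "openin K U" unfolding U_def using G by blast
    have lU: "l \<in> U" unfolding U_def using lK e by auto
    from lam[OF P] have "l \<in> K closure_of (ev ` P)" unfolding D_def .
    then obtain y where y: "y \<in> ev ` P" "y \<in> U" using oU lU unfolding in_closure_of by blast
    then obtain s where s: "s \<in> P" "y = ev s" by auto
    have "cmod (g s - l g) < e" if "g \<in> G" for g
    proof -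
      have "g \<in> A" using that G(2) by auto
      then show ?thesis
        using y(2) s(2) that unfolding U_def ev_def by (auto simp: dist_norm norm_minus_commute)
    qed
    then show ?thesis using s(1) by blast
  qed
  have clu0: "\<exists>s. \<forall>g\<in>G. cmod (g s - l g) < e" if "finite G" "G \<subseteq> A" "0 < e" for G e
    using clu[OF P0 that] by blast
  have ext: "l \<in> extensional A" using lK unfolding tK by (auto simp: PiE_def)
  have chr: "is_character A l"
    unfolding is_character_def
  proof (intro conjI ballI allI)
    fix f g assume f: "f \<in> A" and g: "g \<in> A"
    define h where "h = (\<lambda>x. f x + g x)"
    have hA: "h \<in> A" unfolding h_def using A_add[OF f g] .
    show "l (\<lambda>x. f x + g x) = l f + l g"
    proof -
      have "cmod (l h - (l f + l g)) \<le> 3 * e" if e: "0 < e" for e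
      proof -
        obtain s where s: "\<forall>k\<in>{f,g,h}. cmod (k s - l k) < e" using clu0[of "{f,g,h}" e] f g hA e by auto
        have "l h - (l f + l g) = (f s - l f) + (g s - l g) - (h s - l h)"
          unfolding h_def by simp
        also have "cmod \<dots> \<le> cmod (f s - l f) + cmod (g s - l g) + cmod (h s - l h)"
          by (rule tri3)
        finally show ?thesis using s by auto
      qed
      then have "l h - (l f + l g) = 0" by (rule zero_by_eps)
      then show ?thesis unfolding h_def by simp
    qed
    define m where "m = (\<lambda>x. f x * g x)"
    have mA: "m \<in> A" unfolding m_def using A_mult[OF f g] .
    obtain Bf where Bf: "\<And>x. cmod (f x) \<le> Bf" using CB_bounded[OF A_CB[OF f]] by auto
    show "l (\<lambda>x. f x * g x) = l f * l g"
    proof -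
      have "cmod (l m - l f * l g) \<le> (1 + Bf + cmod (l g)) * e" if e: "0 < e" for e
      proof -
        obtain s where s: "\<forall>k\<in>{f,g,m}. cmod (k s - l k) < e" using clu0[of "{f,g,m}" e] f g mA e by auto
        have eq: "l m - l f * l g = f s * (g s - l g) + l g * (f s - l f) - (m s - l m)"
          unfolding m_def by (simp add: algebra_simps)
        have a: "cmod (f s * (g s - l g)) \<le> Bf * e"
          unfolding norm_mult proof (intro mult_mono)
          show "0 \<le> Bf" using Bf[of s] norm_ge_zero[of "f s"] by linarith
        qed (use Bf[of s] s in auto)
        have b: "cmod (l g * (f s - l f)) \<le> cmod (l g) * e"
          unfolding norm_mult using s by (intro mult_left_mono) auto
        have c: "cmod (m s - l m) \<le> e" using s by auto
        have "cmod (l m - l f * l g) \<le> cmod (f s * (g s - l g)) + cmod (l g * (f s - l f)) + cmod (m s - l m)"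
          unfolding eq by (rule tri3)
        then show ?thesis using a b c by (simp add: algebra_simps)
      qed
      then have "l m - l f * l g = 0" by (rule zero_by_eps)
      then show ?thesis unfolding m_def by simp
    qed
  next
    fix c f assume f: "f \<in> A"
    define m where "m = (\<lambda>x. c * f x)"
    have mA: "m \<in> A" unfolding m_def using A_smult[OF f] .
    have "cmod (l m - c * l f) \<le> (1 + cmod c) * e" if e: "0 < e" for e
    proof -
      obtain s where s: "\<forall>k\<in>{f,m}. cmod (k s - l k) < e" using clu0[of "{f,m}" e] f mA e by auto
      have eq: "l m - c * l f = c * (f s - l f) - (m s - l m)"
        unfolding m_def by (simp add: algebra_simps)
      have b: "cmod (c * (f s - l f)) \<le> cmod c * e"
        unfolding norm_mult using s by (intro mult_left_mono) auto
      have "cmod (l m - c * l f) \<le> cmod (c * (f s - l f)) + cmod (m s - l m)"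
        unfolding eq by (rule norm_triangle_ineq4)
      then show ?thesis using b s by (simp add: algebra_simps)
    qed
    then have "l m - c * l f = 0" by (rule zero_by_eps)
    then show "l (\<lambda>x. c * f x) = c * l f" unfolding m_def by simp
  next
    have "cmod (1 - l (\<lambda>x. 1)) \<le> 1 * e" if e: "0 < e" for e
      using clu0[of "{\<lambda>x. 1}" e] A_one e by auto
    then have "1 - l (\<lambda>x. 1) = 0" by (rule zero_by_eps)
    then show "\<exists>f\<in>A. l f \<noteq> 0" using A_one by (intro bexI[of _ "\<lambda>x. 1"]) auto
  qed
  show ?thesis using ext chr clu by blast
qed

context
  fixes lc :: "'a::{topological_space,semigroup_mult} itself"
  assumes lc: "\<And>s::'a. continuous_on UNIV (\<lambda>x. s * x)"
begin

lemma Lmc_chA: "is_character (Lmc :: ('a \<Rightarrow> complex) set) \<rho> \<Longrightarrow> chA Lmc \<rho>"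
  by (rule chI[OF alg_Lmc[OF lc]])

lemma Lmc_algA: "algA (Lmc :: ('a \<Rightarrow> complex) set)"
  by (rule algI[OF alg_Lmc[OF lc]])

lemma ext_char:
  assumes rho: "is_character (Lmc :: ('a \<Rightarrow> complex) set) \<rho>"
  shows "\<exists>l\<in>betaS. \<forall>g\<in>Lmc. l g = \<rho> g"
proof -
  interpret chA Lmc \<rho> by (rule Lmc_chA[OF rho])
  define U where "U = (\<lambda>G e. {s::'a. \<forall>g\<in>G. cmod (g s - \<rho> g) < e})"
  define \<P> where "\<P> = {U G e | G e. finite G \<and> G \<subseteq> Lmc \<and> 0 < e}"
  have "U {} 1 \<in> \<P>" unfolding \<P>_def by (intro CollectI exI[of _ "{}"] exI[of _ "1::real"]) simp
  then have ne: "\<P> \<noteq> {}" by auto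
  have Pne: "P \<noteq> {}" if "P \<in> \<P>" for P
    using that ch_approx unfolding \<P>_def U_def by fastforce
  have dir: "\<exists>R\<in>\<P>. R \<subseteq> P \<inter> Q" if PQ: "P \<in> \<P>" "Q \<in> \<P>" for P Q
  proof -
    obtain G1 e1 where 1: "P = U G1 e1" "finite G1" "G1 \<subseteq> Lmc" "0 < e1" using PQ(1) unfolding \<P>_def by blast
    obtain G2 e2 where 2: "Q = U G2 e2" "finite G2" "G2 \<subseteq> Lmc" "0 < e2" using PQ(2) unfolding \<P>_def by blast
    have "U (G1 \<union> G2) (min e1 e2) \<in> \<P>" unfolding \<P>_def using 1 2
      by (intro CollectI exI[of _ "G1 \<union> G2"] exI[of _ "min e1 e2"]) auto
    moreover have "U (G1 \<union> G2) (min e1 e2) \<subseteq> P \<inter> Q" unfolding 1 2 U_def by auto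
    ultimately show ?thesis by blast
  qed
  obtain l where l: "is_character CB l"
    "\<forall>P\<in>\<P>. \<forall>G e. finite G \<and> G \<subseteq> CB \<and> 0 < e \<longrightarrow> (\<exists>s\<in>P. \<forall>g\<in>G. cmod (g s - l g) < e)"
    using cluster_char[OF alg_CB ne Pne dir] by blast
  have "l g = \<rho> g" if g: "g \<in> Lmc" for g
  proof -
    have "cmod (l g - \<rho> g) \<le> 2 * e" if e: "0 < e" for e
    proof -
      have "U {g} e \<in> \<P>" unfolding \<P>_def using g e by (intro CollectI exI[of _ "{g}"] exI[of _ e]) auto
      note P = this
      have fin: "finite {g} \<and> {g} \<subseteq> CB \<and> 0 < e" using e Lmc_CB[OF g] by simp
      obtain s where s: "s \<in> U {g} e" "\<forall>h\<in>{g}. cmod (h s - l h) < e"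
        using mp[OF spec[OF spec[OF bspec[OF l(2) P]]] fin] by blast
      have "cmod (l g - \<rho> g) \<le> cmod (g s - l g) + cmod (g s - \<rho> g)"
        using norm_triangle_ineq4[of "g s - \<rho> g" "g s - l g"] by (simp add: norm_minus_commute)
      then show ?thesis using s unfolding U_def by simp
    qed
    then show ?thesis using zero_by_eps[of "l g - \<rho> g" 2] by simp
  qed
  then show ?thesis using l(1) unfolding betaS_def by blast
qed

lemma T_CB:
  assumes rho: "is_character (Lmc :: ('a \<Rightarrow> complex) set) \<rho>" and f: "f \<in> Lmc"
  shows "Tmu \<rho> f \<in> CB"
proof -
  obtain l where l: "l \<in> betaS" "\<forall>g\<in>Lmc. l g = \<rho> g" using ext_char[OF rho] by blast
  have "Tmu \<rho> f = Tmu l f" unfolding Tmu_def using l(2) Ltr_Lmc[OF lc f] by simp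
  then show ?thesis using Lmc_T[OF f l(1)] by simp
qed

lemma T_add:
  assumes rho: "is_character (Lmc :: ('a \<Rightarrow> complex) set) \<rho>" and f: "f \<in> Lmc" and g: "g \<in> Lmc"
  shows "Tmu \<rho> (\<lambda>x. f x + g x) = (\<lambda>s. Tmu \<rho> f s + Tmu \<rho> g s)"
  by (rule ext, simp only: Tmu_add chA.ch_add[OF Lmc_chA[OF rho] Ltr_Lmc[OF lc f] Ltr_Lmc[OF lc g]], simp add: Tmu_def)

lemma T_mult:
  assumes rho: "is_character (Lmc :: ('a \<Rightarrow> complex) set) \<rho>" and f: "f \<in> Lmc" and g: "g \<in> Lmc"
  shows "Tmu \<rho> (\<lambda>x. f x * g x) = (\<lambda>s. Tmu \<rho> f s * Tmu \<rho> g s)"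
  by (rule ext, simp only: Tmu_mult chA.ch_mult[OF Lmc_chA[OF rho] Ltr_Lmc[OF lc f] Ltr_Lmc[OF lc g]], simp add: Tmu_def)

lemma T_smult:
  assumes rho: "is_character (Lmc :: ('a \<Rightarrow> complex) set) \<rho>" and f: "f \<in> Lmc"
  shows "Tmu \<rho> (\<lambda>x. c * f x) = (\<lambda>s. c * Tmu \<rho> f s)"
  by (rule ext, simp only: Tmu_smult chA.ch_smult[OF Lmc_chA[OF rho] Ltr_Lmc[OF lc f]], simp add: Tmu_def)

lemma T_one:
  assumes rho: "is_character (Lmc :: ('a \<Rightarrow> complex) set) \<rho>"
  shows "Tmu \<rho> (\<lambda>x. 1) = (\<lambda>s::'a. 1)"
  using chA.ch_one[OF Lmc_chA[OF rho]] by (simp add: Tmu_const[abs_def])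

lemma Ltr_Tmu: "Ltr t (Tmu \<rho> f) = Tmu \<rho> (Ltr t f)"
  unfolding Tmu_def by (rule ext) (simp add: Ltr_Ltr, simp add: Ltr_def)

lemma T_Lmc:
  assumes rho: "is_character (Lmc :: ('a \<Rightarrow> complex) set) \<rho>" and f: "f \<in> Lmc"
  shows "Tmu \<rho> f \<in> Lmc"
  unfolding Lmc_def
proof (intro CollectI conjI ballI)
  show "Tmu \<rho> f \<in> CB" by (rule T_CB[OF rho f])
  fix \<kappa> :: "('a \<Rightarrow> complex) \<Rightarrow> complex" assume k: "\<kappa> \<in> betaS"
  interpret K: chA CB \<kappa> by (rule beta_chA[OF k])
  define \<sigma> where "\<sigma> = (\<lambda>g. \<kappa> (Tmu \<rho> g))"
  have sig: "is_character Lmc \<sigma>"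
    unfolding is_character_def
  proof (intro conjI ballI allI)
    fix f g :: "'a \<Rightarrow> complex" assume f: "f \<in> Lmc" and g: "g \<in> Lmc"
    show "\<sigma> (\<lambda>x. f x + g x) = \<sigma> f + \<sigma> g"
      unfolding \<sigma>_def T_add[OF rho f g] by (rule K.ch_add[OF T_CB[OF rho f] T_CB[OF rho g]])
    show "\<sigma> (\<lambda>x. f x * g x) = \<sigma> f * \<sigma> g"
      unfolding \<sigma>_def T_mult[OF rho f g] by (rule K.ch_mult[OF T_CB[OF rho f] T_CB[OF rho g]])
  next
    fix c and f :: "'a \<Rightarrow> complex" assume f: "f \<in> Lmc"
    show "\<sigma> (\<lambda>x. c * f x) = c * \<sigma> f"
      unfolding \<sigma>_def T_smult[OF rho f] by (rule K.ch_smult[OF T_CB[OF rho f]])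
  next
    show "\<exists>f\<in>Lmc. \<sigma> f \<noteq> 0"
      using algA.A_one[OF algI[OF alg_Lmc[OF lc]]] K.ch_one T_one[OF rho] unfolding \<sigma>_def
      by (intro bexI[of _ "\<lambda>x. 1"]) auto
  qed
  have "Tmu \<kappa> (Tmu \<rho> f) = Tmu \<sigma> f"
    unfolding Tmu_def[of \<kappa>] \<sigma>_def by (simp add: Ltr_Tmu Tmu_def[of "\<lambda>g. \<kappa> (Tmu \<rho> g)"])
  then show "Tmu \<kappa> (Tmu \<rho> f) \<in> CB" using T_CB[OF sig f] by simp
qed

lemma SLmc_char: "\<mu> \<in> SLmc \<Longrightarrow> is_character Lmc \<mu>" unfolding SLmc_def by simp
lemma SLmc_ext: "\<mu> \<in> SLmc \<Longrightarrow> \<mu> \<in> extensional Lmc" unfolding SLmc_def by simp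

lemma mult_SLmc:
  assumes m: "(\<mu> :: ('a \<Rightarrow> complex) \<Rightarrow> complex) \<in> SLmc" and n: "\<nu> \<in> SLmc"
  shows "lmc_mult \<mu> \<nu> \<in> SLmc"
proof -
  note rho = SLmc_char[OF n]
  interpret M: chA Lmc \<mu> by (rule Lmc_chA[OF SLmc_char[OF m]])
  interpret N: chA Lmc \<nu> by (rule Lmc_chA[OF rho])
  interpret LA: algA "Lmc :: ('a \<Rightarrow> complex) set" by (rule Lmc_algA)
  have "is_character Lmc (lmc_mult \<mu> \<nu>)"
    unfolding is_character_def lmc_mult_def
  proof (intro conjI ballI allI)
    fix f g :: "'a \<Rightarrow> complex" assume f: "f \<in> Lmc" and g: "g \<in> Lmc"
    show "restrict (\<lambda>f. \<mu> (Tmu \<nu> f)) Lmc (\<lambda>x. f x + g x) = restrict (\<lambda>f. \<mu> (Tmu \<nu> f)) Lmc f + restrict (\<lambda>f. \<mu> (Tmu \<nu> f)) Lmc g"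
      using f g algA.A_add[OF Lmc_algA f g] T_add[OF rho f g] M.ch_add[OF T_Lmc[OF rho f] T_Lmc[OF rho g]] by simp
    show "restrict (\<lambda>f. \<mu> (Tmu \<nu> f)) Lmc (\<lambda>x. f x * g x) = restrict (\<lambda>f. \<mu> (Tmu \<nu> f)) Lmc f * restrict (\<lambda>f. \<mu> (Tmu \<nu> f)) Lmc g"
      using f g algA.A_mult[OF Lmc_algA f g] T_mult[OF rho f g] M.ch_mult[OF T_Lmc[OF rho f] T_Lmc[OF rho g]] by simp
  next
    fix c and f :: "'a \<Rightarrow> complex" assume f: "f \<in> Lmc"
    show "restrict (\<lambda>f. \<mu> (Tmu \<nu> f)) Lmc (\<lambda>x. c * f x) = c * restrict (\<lambda>f. \<mu> (Tmu \<nu> f)) Lmc f"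
      using f algA.A_smult[OF Lmc_algA f] T_smult[OF rho f] M.ch_smult[OF T_Lmc[OF rho f]] by simp
  next
    show "\<exists>f\<in>Lmc. restrict (\<lambda>f. \<mu> (Tmu \<nu> f)) Lmc f \<noteq> 0"
      using algA.A_one[OF Lmc_algA] T_one[OF rho] M.ch_one by (intro bexI[of _ "\<lambda>x. 1"]) auto
  qed
  then show ?thesis unfolding SLmc_def lmc_mult_def by simp
qed

end

definition approx :: "(('a::{topological_space,semigroup_mult} \<Rightarrow> complex) \<Rightarrow> complex) \<Rightarrow> 'a set \<Rightarrow> bool" where
  "approx \<phi> A \<longleftrightarrow> (\<forall>G e. finite G \<and> G \<subseteq> Lmc \<and> 0 < e \<longrightarrow> (\<exists>a\<in>A. \<forall>g\<in>G. cmod (g a - \<phi> g) < e))"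

lemma topspace_SLmc: "topspace SLmc_top = SLmc"
  unfolding SLmc_top_def SLmc_def by (auto simp: PiE_def)

lemma finite_common_eps:
  fixes c :: "_ \<Rightarrow> 'b::metric_space"
  shows "finite G \<Longrightarrow> (\<forall>g\<in>G. \<exists>e>0. ball (c g) e \<subseteq> V g) \<Longrightarrow> \<exists>e>0. \<forall>g\<in>G. ball (c g) e \<subseteq> V g"
proof (induction G rule: finite_induct)
  case empty then show ?case by (auto intro: exI[of _ 1])
next
  case (insert g G)
  then obtain e1 where e1: "e1 > 0" "\<forall>g\<in>G. ball (c g) e1 \<subseteq> V g" by auto
  obtain e2 where e2: "e2 > 0" "ball (c g) e2 \<subseteq> V g" using insert by auto
  have b: "ball x (min e1 e2) \<subseteq> ball x e1" "ball x (min e1 e2) \<subseteq> ball x e2" for x by auto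
  have "\<forall>g'\<in>insert g G. ball (c g') (min e1 e2) \<subseteq> V g'"
    using e1(2) e2(2) b by blast
  then show ?case using e1 e2 by (intro exI[of _ "min e1 e2"]) auto
qed

context
  fixes lc :: "'a::{topological_space,semigroup_mult} itself"
  assumes lc: "\<And>s::'a. continuous_on UNIV (\<lambda>x. s * x)"
begin

lemma evl_SLmc: "evl (s::'a) \<in> SLmc"
  unfolding SLmc_def
proof (intro CollectI conjI)
  interpret LA: algA "Lmc :: ('a \<Rightarrow> complex) set" by (rule Lmc_algA[OF lc])
  show "evl s \<in> extensional Lmc" unfolding evl_def by simp
  show "is_character Lmc (evl s)"
    unfolding is_character_def evl_def
    using LA.A_add LA.A_mult LA.A_smult LA.A_one by (auto intro!: bexI[of _ "\<lambda>x. 1"])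
qed

lemma approx_imp_closure:
  assumes phi: "\<phi> \<in> SLmc" and ap: "approx \<phi> (A::'a set)"
  shows "\<phi> \<in> lmc_closure A"
  unfolding lmc_closure_def in_closure_of
proof (intro conjI allI impI)
  show "\<phi> \<in> topspace SLmc_top" using phi by (simp only: topspace_SLmc)
  fix T assume T: "\<phi> \<in> T \<and> openin SLmc_top T"
  then obtain U where U: "openin (product_topology (\<lambda>_. euclidean) Lmc) U" "T = U \<inter> SLmc"
    unfolding SLmc_top_def openin_subtopology by auto
  then have "\<phi> \<in> U" using T by auto
  then obtain V where V: "finite {i \<in> Lmc. V i \<noteq> UNIV}" "\<forall>i\<in>Lmc. open (V i)"
      "\<phi> \<in> PiE Lmc V" "PiE Lmc V \<subseteq> U"
    using U(1) unfolding openin_product_topology_alt by auto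
  define G where "G = {i \<in> Lmc. V i \<noteq> UNIV}"
  have "\<forall>g\<in>G. \<exists>e>0. ball (\<phi> g) e \<subseteq> V g"
    using V(2,3) unfolding G_def by (auto simp: PiE_iff open_contains_ball)
  then obtain e where e: "e > 0" "\<forall>g\<in>G. ball (\<phi> g) e \<subseteq> V g"
    using finite_common_eps[of G "\<phi>" V] V(1) unfolding G_def by auto
  have fin: "finite G \<and> G \<subseteq> Lmc \<and> 0 < e" using V(1) e unfolding G_def by auto
  obtain a where a: "a \<in> A" "\<forall>g\<in>G. cmod (g a - \<phi> g) < e"
    using mp[OF spec[OF spec[OF ap[unfolded approx_def]]] fin] by blast
  have "evl a \<in> PiE Lmc V"
  proof (rule PiE_I)
    fix g :: "'a \<Rightarrow> complex" assume g: "g \<in> Lmc"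
    show "evl a g \<in> V g"
    proof (cases "g \<in> G")
      case True
      then have "g a \<in> ball (\<phi> g) e" using a(2) by (auto simp: dist_norm norm_minus_commute)
      moreover have "ball (\<phi> g) e \<subseteq> V g" using e(2) True by blast
      ultimately show ?thesis using g unfolding evl_def by auto
    next
      case False
      then show ?thesis using g unfolding G_def by auto
    qed
  next
    fix g :: "'a \<Rightarrow> complex" assume "g \<notin> Lmc" then show "evl a g = undefined" unfolding evl_def by simp
  qed
  then have "evl a \<in> U" using V(4) by auto
  moreover have "evl a \<in> SLmc" by (rule evl_SLmc)
  ultimately show "\<exists>y. y \<in> evl ` A \<and> y \<in> T" using a(1) U(2) by auto
qed

lemma closure_imp_approx:
  assumes phi: "\<phi> \<in> lmc_closure (A::'a set)"
  shows "\<phi> \<in> SLmc \<and> approx \<phi> A"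
proof
  have "\<phi> \<in> topspace SLmc_top" using phi unfolding lmc_closure_def in_closure_of by blast
  then show phiS: "\<phi> \<in> SLmc" by (simp only: topspace_SLmc)
  show "approx \<phi> A"
    unfolding approx_def
  proof (intro allI impI)
    fix G :: "('a \<Rightarrow> complex) set" and e :: real
    assume G: "finite G \<and> G \<subseteq> Lmc \<and> 0 < e"
    have op: "openin SLmc_top {\<psi> \<in> topspace SLmc_top. \<forall>g\<in>G'. \<psi> g \<in> ball (\<phi> g) e}"
      if "finite G'" "G' \<subseteq> Lmc" for G'
      using that
    proof (induction G' rule: finite_induct)
      case empty then show ?case by simp
    next
      case (insert g G')
      have gA: "g \<in> Lmc" using insert by auto
      have cm: "continuous_map SLmc_top euclidean (\<lambda>x. x g)"
        unfolding SLmc_top_def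
        by (rule continuous_map_from_subtopology[OF continuous_map_product_projection[OF gA]])
      have o: "openin SLmc_top {\<psi> \<in> topspace SLmc_top. \<psi> g \<in> ball (\<phi> g) e}"
        by (rule openin_continuous_map_preimage[OF cm]) simp
      have "{\<psi> \<in> topspace SLmc_top. \<forall>g\<in>insert g G'. \<psi> g \<in> ball (\<phi> g) e} =
         {\<psi> \<in> topspace SLmc_top. \<forall>g\<in>G'. \<psi> g \<in> ball (\<phi> g) e} \<inter> {\<psi> \<in> topspace SLmc_top. \<psi> g \<in> ball (\<phi> g) e}"
        by auto
      then show ?case using insert o by (simp add: openin_Int)
    qed
    define T0 where "T0 = {\<psi> \<in> topspace SLmc_top. \<forall>g\<in>G. \<psi> g \<in> ball (\<phi> g) e}"
    have oT: "openin SLmc_top T0" unfolding T0_def using op G by blast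
    have pT: "\<phi> \<in> T0"
    proof -
      have "\<forall>g\<in>G. \<phi> g \<in> ball (\<phi> g) e" using G by simp
      then show ?thesis unfolding T0_def using \<open>\<phi> \<in> topspace SLmc_top\<close> by (intro CollectI conjI)
    qed
    have "\<forall>T. \<phi> \<in> T \<and> openin SLmc_top T \<longrightarrow> (\<exists>y. y \<in> evl ` A \<and> y \<in> T)"
      using phi unfolding lmc_closure_def in_closure_of by (rule conjunct2)
    then have "\<exists>y. y \<in> evl ` A \<and> y \<in> T0" using oT pT by blast
    then obtain y where y: "y \<in> evl ` A" "y \<in> T0" by blast
    then obtain a where a: "a \<in> A" "y = evl a" by auto
    have "cmod (g a - \<phi> g) < e" if g: "g \<in> G" for g
    proof -
      have "g \<in> Lmc" using g G by auto
      then have "y g = g a" using a(2) by (simp add: evl_def)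
      moreover have "y g \<in> ball (\<phi> g) e" using y(2) g unfolding T0_def by blast
      ultimately show ?thesis by (simp add: dist_norm norm_minus_commute)
    qed
    then show "\<exists>a\<in>A. \<forall>g\<in>G. cmod (g a - \<phi> g) < e" using a(1) by blast
  qed
qed

lemma lmc_closure_iff: "\<phi> \<in> lmc_closure (A::'a set) \<longleftrightarrow> \<phi> \<in> SLmc \<and> approx \<phi> A"
  using closure_imp_approx approx_imp_closure by blast

end

lemma le_by_eps: "(\<And>e. 0 < e \<Longrightarrow> (x::real) < d + e) \<Longrightarrow> x \<le> d"
  by (meson field_le_epsilon less_imp_le)

lemma approx_mono: "approx \<phi> A \<Longrightarrow> A \<subseteq> B \<Longrightarrow> approx \<phi> B"
  unfolding approx_def by (meson subsetD)

lemma approxD: "approx \<phi> A \<Longrightarrow> finite G \<Longrightarrow> G \<subseteq> Lmc \<Longrightarrow> 0 < e \<Longrightarrow> \<exists>a\<in>A. \<forall>g\<in>G. cmod (g a - \<phi> g) < e"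
  unfolding approx_def by blast

context
  fixes lc :: "'a::{topological_space,ab_semigroup_mult} itself"
  assumes lc: "\<And>s::'a. continuous_on UNIV (\<lambda>x. s * x)"
begin

lemma Tmu_evl: "f \<in> Lmc \<Longrightarrow> Tmu (evl (s::'a)) f = Ltr s f"
  using Ltr_Lmc[OF lc] unfolding Tmu_def evl_def Ltr_def by (auto simp: mult.commute)

lemma evl_app: "f \<in> Lmc \<Longrightarrow> evl s f = f s"
  unfolding evl_def by simp

lemma tail_approx:
  assumes phi: "\<phi> \<in> SLmc" and ne: "\<phi> \<notin> range evl" and ap: "approx \<phi> (range (y::nat \<Rightarrow> 'a))"
  shows "approx \<phi> (y ` {k<..})"
  unfolding approx_def
proof (intro allI impI)
  fix G :: "('a \<Rightarrow> complex) set" and e :: real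
  assume G: "finite G \<and> G \<subseteq> Lmc \<and> 0 < e"
  have "\<exists>h\<in>Lmc. \<phi> h \<noteq> h (y j)" for j
  proof (rule ccontr)
    assume "\<not> ?thesis"
    then have "\<forall>h\<in>Lmc. \<phi> h = evl (y j) h" unfolding evl_def by simp
    then have "\<phi> = evl (y j)"
      using SLmc_ext[OF lc phi] by (intro extensionalityI[where A=Lmc]) (auto simp: evl_def)
    then show False using ne by auto
  qed
  then obtain H where H: "\<And>j. H j \<in> Lmc" "\<And>j. \<phi> (H j) \<noteq> H j (y j)" by metis
  define d where "d = (\<lambda>j. cmod (\<phi> (H j) - H j (y j)))"
  have dpos: "d j > 0" for j using H(2)[of j] unfolding d_def by simp
  define e' where "e' = Min (insert e (d ` {..k}))"
  have e'pos: "e' > 0" unfolding e'_def using G dpos by (subst Min_gr_iff) auto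
  have e'e: "e' \<le> e" unfolding e'_def by auto
  have e'd: "e' \<le> d j" if "j \<le> k" for j
    unfolding e'_def using that by (intro Min_le) auto
  have "finite (G \<union> H ` {..k})" "G \<union> H ` {..k} \<subseteq> Lmc" using G H(1) by auto
  from approxD[OF ap this e'pos] obtain a where a: "a \<in> range y"
    "\<forall>g\<in>G \<union> H ` {..k}. cmod (g a - \<phi> g) < e'" by blast
  then obtain n where n: "a = y n" by auto
  have "n > k"
  proof (rule ccontr)
    assume "\<not> n > k"
    then have nk: "n \<le> k" by simp
    then have "cmod (H n (y n) - \<phi> (H n)) < e'" using a(2) n by auto
    also have "\<dots> \<le> d n" using e'd[OF nk] .
    finally show False unfolding d_def by (simp add: norm_minus_commute)
  qed
  then show "\<exists>a\<in>y ` {k<..}. \<forall>g\<in>G. cmod (g a - \<phi> g) < e"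
    using a(2) n e'e by (intro bexI[of _ "y n"]) force+
qed

lemma prod_in_closure:
  assumes mu: "\<mu> \<in> lmc_closure (range (x::nat \<Rightarrow> 'a))" and nu: "\<nu> \<in> lmc_closure (range (y::nat \<Rightarrow> 'a))"
    and ne: "\<nu> \<notin> range evl"
  shows "lmc_mult \<mu> \<nu> \<in> lmc_closure {x k * y n | k n. k < n}"
proof -
  have muS: "\<mu> \<in> SLmc" and muA: "approx \<mu> (range x)" using closure_imp_approx[OF lc mu] by auto
  have nuS: "\<nu> \<in> SLmc" and nuA: "approx \<nu> (range y)" using closure_imp_approx[OF lc nu] by auto
  note rho = SLmc_char[OF lc nuS]
  have "approx (lmc_mult \<mu> \<nu>) {x k * y n | k n. k < n}"
    unfolding approx_def
  proof (intro allI impI)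
    fix G :: "('a \<Rightarrow> complex) set" and e :: real
    assume G: "finite G \<and> G \<subseteq> Lmc \<and> 0 < e"
    have "finite (Tmu \<nu> ` G)" "Tmu \<nu> ` G \<subseteq> Lmc" using G T_Lmc[OF lc rho] by auto
    from approxD[OF muA this, of "e/2"] G obtain a where a: "a \<in> range x"
      "\<forall>g\<in>Tmu \<nu> ` G. cmod (g a - \<mu> g) < e/2" by auto
    then obtain k where k: "a = x k" by auto
    have "finite ((\<lambda>g. Ltr (x k) g) ` G)" "(\<lambda>g. Ltr (x k) g) ` G \<subseteq> Lmc" using G Ltr_Lmc[OF lc] by auto
    from approxD[OF tail_approx[OF nuS ne nuA, of k] this, of "e/2"] G obtain b where b:
      "b \<in> y ` {k<..}" "\<forall>g\<in>(\<lambda>g. Ltr (x k) g) ` G. cmod (g b - \<nu> g) < e/2" by auto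
    then obtain n where n: "b = y n" "k < n" by auto
    have "cmod (g (x k * y n) - lmc_mult \<mu> \<nu> g) < e" if g: "g \<in> G" for g
    proof -
      have gL: "g \<in> Lmc" using g G by auto
      have 1: "cmod (Tmu \<nu> g (x k) - \<mu> (Tmu \<nu> g)) < e/2" using a(2) k g by auto
      have 2: "cmod (g (x k * y n) - \<nu> (Ltr (x k) g)) < e/2" using b(2) n g by (auto simp: Ltr_def)
      have 3: "Tmu \<nu> g (x k) = \<nu> (Ltr (x k) g)" by (simp add: Tmu_def)
      have 4: "lmc_mult \<mu> \<nu> g = \<mu> (Tmu \<nu> g)" using gL by (simp add: lmc_mult_def)
      have "cmod (g (x k * y n) - \<mu> (Tmu \<nu> g)) \<le> cmod (g (x k * y n) - \<nu> (Ltr (x k) g)) + cmod (Tmu \<nu> g (x k) - \<mu> (Tmu \<nu> g))"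
        unfolding 3 using norm_triangle_ineq[of "g (x k * y n) - \<nu> (Ltr (x k) g)" "\<nu> (Ltr (x k) g) - \<mu> (Tmu \<nu> g)"]
        by simp
      then show ?thesis unfolding 4 using 1 2 by linarith
    qed
    then show "\<exists>a\<in>{x k * y n | k n. k < n}. \<forall>g\<in>G. cmod (g a - lmc_mult \<mu> \<nu> g) < e"
      using n(2) by blast
  qed
  then show ?thesis using lmc_closure_iff[OF lc] mult_SLmc[OF lc muS nuS] by blast
qed

end

context
  fixes lc :: "'a::{topological_space,ab_semigroup_mult} itself"
  assumes lc: "\<And>s::'a. continuous_on UNIV (\<lambda>x. s * x)"
begin

lemma seq_cluster:
  fixes x :: "nat \<Rightarrow> 'a"
  shows "\<exists>\<phi>\<in>SLmc. \<forall>m G e. finite G \<and> G \<subseteq> Lmc \<and> 0 < e \<longrightarrow> (\<exists>n\<ge>m. \<forall>g\<in>G. cmod (g (x n) - \<phi> g) < e)"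
proof -
  define \<P> where "\<P> = range (\<lambda>m. x ` {m..})"
  have ne: "\<P> \<noteq> {}" unfolding \<P>_def by simp
  have Pne: "P \<noteq> {}" if "P \<in> \<P>" for P using that unfolding \<P>_def by auto
  have dir: "\<exists>R\<in>\<P>. R \<subseteq> P \<inter> Q" if PQ: "P \<in> \<P>" "Q \<in> \<P>" for P Q
  proof -
    obtain m1 m2 where "P = x ` {m1..}" "Q = x ` {m2..}" using PQ unfolding \<P>_def by auto
    then show ?thesis unfolding \<P>_def by (intro bexI[of _ "x ` {max m1 m2..}"]) auto
  qed
  obtain \<phi> where phi: "\<phi> \<in> extensional Lmc" "is_character Lmc \<phi>"
    "\<forall>P\<in>\<P>. \<forall>G e. finite G \<and> G \<subseteq> Lmc \<and> 0 < e \<longrightarrow> (\<exists>s\<in>P. \<forall>g\<in>G. cmod (g s - \<phi> g) < e)"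
    using cluster_char[OF alg_Lmc[OF lc] ne Pne dir] by blast
  have "\<exists>n\<ge>m. \<forall>g\<in>G. cmod (g (x n) - \<phi> g) < e" if G: "finite G \<and> G \<subseteq> Lmc \<and> 0 < e" for m G e
  proof -
    have "x ` {m..} \<in> \<P>" unfolding \<P>_def by simp
    from mp[OF spec[OF spec[OF bspec[OF phi(3) this]]] G] obtain s where
      "s \<in> x ` {m..}" "\<forall>g\<in>G. cmod (g s - \<phi> g) < e" by blast
    then show ?thesis by auto
  qed
  moreover have "\<phi> \<in> SLmc" unfolding SLmc_def using phi by simp
  ultimately show ?thesis by blast
qed

lemma construct:
  assumes muS: "\<mu> \<in> SLmc" and nuS: "\<nu> \<in> SLmc" and f: "f \<in> Lmc" and d: "0 < \<delta>"
  shows "\<exists>x y :: nat \<Rightarrow> 'a. \<forall>k n. k < n \<longrightarrow>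
     cmod (f (y k * x n) - \<nu> (Tmu \<mu> f)) < \<delta> \<and> cmod (f (x k * y n) - \<mu> (Tmu \<nu> f)) < \<delta>"
proof -
  define a where "a = \<mu> (Tmu \<nu> f)"
  define b where "b = \<nu> (Tmu \<mu> f)"
  interpret M: chA Lmc \<mu> by (rule Lmc_chA[OF lc SLmc_char[OF lc muS]])
  interpret N: chA Lmc \<nu> by (rule Lmc_chA[OF lc SLmc_char[OF lc nuS]])
  have TnL: "Tmu \<nu> f \<in> Lmc" by (rule T_Lmc[OF lc SLmc_char[OF lc nuS] f])
  have TmL: "Tmu \<mu> f \<in> Lmc" by (rule T_Lmc[OF lc SLmc_char[OF lc muS] f])
  define Q where "Q = (\<lambda>p::'a \<times> 'a. cmod (Tmu \<nu> f (fst p) - a) < \<delta>/2 \<and> cmod (Tmu \<mu> f (snd p) - b) < \<delta>/2)"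
  define P where "P = (\<lambda>ps (z::'a \<times> 'a). Q z \<and>
      (\<forall>p\<in>set ps. cmod (f (snd p * fst z) - b) < \<delta> \<and> cmod (f (fst p * snd z) - a) < \<delta>))"
  have ex: "\<exists>z. P ps z" if ps: "\<forall>p\<in>set ps. Q p" for ps
  proof -
    have "finite (insert (Tmu \<nu> f) ((\<lambda>p. Ltr (snd p) f) ` set ps))"
      "insert (Tmu \<nu> f) ((\<lambda>p. Ltr (snd p) f) ` set ps) \<subseteq> Lmc" using TnL Ltr_Lmc[OF lc f] by auto
    from M.ch_approx[OF this, of "\<delta>/2"] d obtain x' where x':
      "\<forall>g\<in>insert (Tmu \<nu> f) ((\<lambda>p. Ltr (snd p) f) ` set ps). cmod (g x' - \<mu> g) < \<delta>/2" by auto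
    have "finite (insert (Tmu \<mu> f) ((\<lambda>p. Ltr (fst p) f) ` set ps))"
      "insert (Tmu \<mu> f) ((\<lambda>p. Ltr (fst p) f) ` set ps) \<subseteq> Lmc" using TmL Ltr_Lmc[OF lc f] by auto
    from N.ch_approx[OF this, of "\<delta>/2"] d obtain y' where y':
      "\<forall>g\<in>insert (Tmu \<mu> f) ((\<lambda>p. Ltr (fst p) f) ` set ps). cmod (g y' - \<nu> g) < \<delta>/2" by auto
    have "Q (x', y')" unfolding Q_def a_def b_def using x' y' by auto
    moreover have "cmod (f (snd p * x') - b) < \<delta> \<and> cmod (f (fst p * y') - a) < \<delta>" if p: "p \<in> set ps" for p
    proof
      have 1: "cmod (f (snd p * x') - \<mu> (Ltr (snd p) f)) < \<delta>/2" using x' p by (auto simp: Ltr_def)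
      have 2: "\<mu> (Ltr (snd p) f) = Tmu \<mu> f (snd p)" by (simp add: Tmu_def)
      have 3: "cmod (Tmu \<mu> f (snd p) - b) < \<delta>/2" using ps p unfolding Q_def by auto
      have "cmod (f (snd p * x') - b) \<le> cmod (f (snd p * x') - \<mu> (Ltr (snd p) f)) + cmod (Tmu \<mu> f (snd p) - b)"
        unfolding 2 using norm_triangle_ineq[of "f (snd p * x') - Tmu \<mu> f (snd p)" "Tmu \<mu> f (snd p) - b"] by simp
      then show "cmod (f (snd p * x') - b) < \<delta>" using 1 3 by linarith
      have 4: "cmod (f (fst p * y') - \<nu> (Ltr (fst p) f)) < \<delta>/2" using y' p by (auto simp: Ltr_def)
      have 5: "\<nu> (Ltr (fst p) f) = Tmu \<nu> f (fst p)" by (simp add: Tmu_def)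
      have 6: "cmod (Tmu \<nu> f (fst p) - a) < \<delta>/2" using ps p unfolding Q_def by auto
      have "cmod (f (fst p * y') - a) \<le> cmod (f (fst p * y') - \<nu> (Ltr (fst p) f)) + cmod (Tmu \<nu> f (fst p) - a)"
        unfolding 5 using norm_triangle_ineq[of "f (fst p * y') - Tmu \<nu> f (fst p)" "Tmu \<nu> f (fst p) - a"] by simp
      then show "cmod (f (fst p * y') - a) < \<delta>" using 4 6 by linarith
    qed
    ultimately show ?thesis unfolding P_def by (intro exI[of _ "(x', y')"]) auto
  qed
  define L where "L = rec_nat [] (\<lambda>n l. l @ [SOME z. P l z])"
  have L0: "L 0 = []" and LS: "L (Suc n) = L n @ [SOME z. P (L n) z]" for n unfolding L_def by simp_all
  define z where "z = (\<lambda>n. SOME z. P (L n) z)"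
  have inv: "(\<forall>p\<in>set (L n). Q p) \<and> L n = map z [0..<n]" for n
  proof (induction n)
    case 0 then show ?case using L0 by simp
  next
    case (Suc n)
    then have "P (L n) (z n)" unfolding z_def using ex by (metis someI_ex)
    then have "Q (z n)" unfolding P_def by simp
    moreover have Ls: "L (Suc n) = L n @ [z n]" unfolding z_def by (rule LS)
    ultimately show ?case using Suc.IH by simp
  qed
  have Pz: "P (map z [0..<n]) (z n)" for n
  proof -
    have "P (L n) (z n)" unfolding z_def using ex inv[of n] by (metis someI_ex)
    then show ?thesis using inv[of n] by simp
  qed
  have "\<forall>k n. k < n \<longrightarrow> cmod (f (snd (z k) * fst (z n)) - b) < \<delta> \<and> cmod (f (fst (z k) * snd (z n)) - a) < \<delta>"
  proof (intro allI impI)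
    fix k n :: nat assume kn: "k < n"
    then have "z k \<in> set (map z [0..<n])" by auto
    then show "cmod (f (snd (z k) * fst (z n)) - b) < \<delta> \<and> cmod (f (fst (z k) * snd (z n)) - a) < \<delta>"
      using Pz[of n] unfolding P_def by blast
  qed
  then show ?thesis unfolding a_def b_def by (intro exI[of _ "\<lambda>n. fst (z n)"] exI[of _ "\<lambda>n. snd (z n)"]) simp
qed

end

lemma close_lemma: "cmod (w - p) < e \<Longrightarrow> cmod (w - c) \<le> d \<Longrightarrow> cmod (p - (c::complex)) < d + e"
  using norm_triangle_ineq[of "p - w" "w - c"] by (simp add: norm_minus_commute)

lemma two_close: "cmod (p - a) \<le> d \<Longrightarrow> cmod (p - b) \<le> d \<Longrightarrow> cmod (a - (b::complex)) \<le> 2 * d"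
  using norm_triangle_ineq[of "a - p" "p - b"] by (simp add: norm_minus_commute)

theorem theorem4p5:
  assumes "\<forall>s::'a::{t2_space, ab_semigroup_mult}. continuous_on UNIV (\<lambda>x. s * x)"
    and "\<forall>s::'a. continuous_on UNIV (\<lambda>x. x * s)"
  shows "\<not> SLmc_commutative TYPE('a) \<longleftrightarrow>
    (\<exists>x y :: nat \<Rightarrow> 'a. unbounded_seq x \<and> unbounded_seq y \<and>
       lmc_closure {x k * y n | k n. k < n} \<inter> lmc_closure {y k * x n | k n. k < n} = {})"
proof
  have lc: "\<And>s::'a. continuous_on UNIV (\<lambda>x. s * x)" using assms(1) by blast
  assume nc: "\<not> SLmc_commutative TYPE('a)"
  then obtain \<mu> \<nu> :: "('a \<Rightarrow> complex) \<Rightarrow> complex" where muS: "\<mu> \<in> SLmc" and nuS: "\<nu> \<in> SLmc"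
    and neq: "lmc_mult \<mu> \<nu> \<noteq> lmc_mult \<nu> \<mu>"
    unfolding SLmc_commutative_def by blast
  obtain f where f: "f \<in> Lmc" and fneq: "\<mu> (Tmu \<nu> f) \<noteq> \<nu> (Tmu \<mu> f)"
  proof -
    have "\<exists>f\<in>Lmc. \<mu> (Tmu \<nu> f) \<noteq> \<nu> (Tmu \<mu> f)"
    proof (rule ccontr)
      assume "\<not> ?thesis"
      then have "lmc_mult \<mu> \<nu> = lmc_mult \<nu> \<mu>" unfolding lmc_mult_def by (intro ext) simp
      then show False using neq by simp
    qed
    then show ?thesis using that by blast
  qed
  define a where "a = \<mu> (Tmu \<nu> f)"
  define b where "b = \<nu> (Tmu \<mu> f)"
  define \<delta> where "\<delta> = cmod (a - b) / 3"
  have dpos: "0 < \<delta>" unfolding \<delta>_def a_def b_def using fneq by simp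
  have ab: "\<not> cmod (a - b) \<le> 2 * \<delta>" unfolding \<delta>_def using dpos \<delta>_def by simp
  obtain x y :: "nat \<Rightarrow> 'a" where xy: "\<forall>k n. k < n \<longrightarrow> cmod (f (y k * x n) - b) < \<delta> \<and> cmod (f (x k * y n) - a) < \<delta>"
    using construct[OF lc muS nuS f dpos] unfolding a_def b_def by blast
  have fL: "{f} \<subseteq> Lmc" using f by simp
  have disj: "lmc_closure {x k * y n | k n. k < n} \<inter> lmc_closure {y k * x n | k n. k < n} = {}"
  proof (rule ccontr)
    assume "\<not> ?thesis"
    then obtain \<phi> where p1: "\<phi> \<in> lmc_closure {x k * y n | k n. k < n}" and p2: "\<phi> \<in> lmc_closure {y k * x n | k n. k < n}"
      by blast
    have A1: "approx \<phi> {x k * y n | k n. k < n}" using closure_imp_approx[OF lc p1] by blast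
    have A2: "approx \<phi> {y k * x n | k n. k < n}" using closure_imp_approx[OF lc p2] by blast
    have "cmod (\<phi> f - a) \<le> \<delta>"
    proof (rule le_by_eps)
      fix e :: real assume e: "0 < e"
      from approxD[OF A1 _ fL e] obtain w where "w \<in> {x k * y n | k n. k < n}" "cmod (f w - \<phi> f) < e" by auto
      then obtain k n where kn: "k < n" "cmod (f (x k * y n) - \<phi> f) < e" by auto
      have c: "cmod (f (x k * y n) - a) < \<delta>" using spec[OF spec[OF xy, of k], of n] kn(1) by simp
      show "cmod (\<phi> f - a) < \<delta> + e" by (rule close_lemma[OF kn(2)]) (use c in simp)
    qed
    moreover have "cmod (\<phi> f - b) \<le> \<delta>"
    proof (rule le_by_eps)
      fix e :: real assume e: "0 < e"
      from approxD[OF A2 _ fL e] obtain w where "w \<in> {y k * x n | k n. k < n}" "cmod (f w - \<phi> f) < e" by auto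
      then obtain k n where kn: "k < n" "cmod (f (y k * x n) - \<phi> f) < e" by auto
      have c: "cmod (f (y k * x n) - b) < \<delta>" using spec[OF spec[OF xy, of k], of n] kn(1) by simp
      show "cmod (\<phi> f - b) < \<delta> + e" by (rule close_lemma[OF kn(2)]) (use c in simp)
    qed
    ultimately show False using two_close ab by blast
  qed
  obtain \<phi> where phiS: "\<phi> \<in> SLmc" and phiC: "\<forall>m G e. finite G \<and> G \<subseteq> Lmc \<and> 0 < e \<longrightarrow> (\<exists>n\<ge>m. \<forall>g\<in>G. cmod (g (x n) - \<phi> g) < e)"
    using seq_cluster[OF lc, of x] by blast
  obtain \<psi> where psiS: "\<psi> \<in> SLmc" and psiC: "\<forall>m G e. finite G \<and> G \<subseteq> Lmc \<and> 0 < e \<longrightarrow> (\<exists>n\<ge>m. \<forall>g\<in>G. cmod (g (y n) - \<psi> g) < e)"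
    using seq_cluster[OF lc, of y] by blast
  have phiT: "Tmu \<phi> f \<in> Lmc" by (rule T_Lmc[OF lc SLmc_char[OF lc phiS] f])
  have psiT: "Tmu \<psi> f \<in> Lmc" by (rule T_Lmc[OF lc SLmc_char[OF lc psiS] f])
  have E1: "cmod (\<psi> (Ltr (x k) f) - a) \<le> \<delta>" for k
  proof (rule le_by_eps)
    fix e :: real assume e: "0 < e"
    have "finite {Ltr (x k) f} \<and> {Ltr (x k) f} \<subseteq> Lmc \<and> 0 < e" using Ltr_Lmc[OF lc f] e by simp
    from mp[OF spec[OF spec[OF spec[OF psiC, of "Suc k"], of "{Ltr (x k) f}"], of e] this]
    obtain n where n: "n \<ge> Suc k" "cmod (Ltr (x k) f (y n) - \<psi> (Ltr (x k) f)) < e" by blast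
    have c: "cmod (f (x k * y n) - a) < \<delta>" using spec[OF spec[OF xy, of k], of n] n(1) by simp
    show "cmod (\<psi> (Ltr (x k) f) - a) < \<delta> + e"
      by (rule close_lemma[of "f (x k * y n)"]) (use n(2) c in \<open>simp_all add: Ltr_def\<close>)
  qed
  have E2: "cmod (\<phi> (Tmu \<psi> f) - a) \<le> \<delta>"
  proof (rule le_by_eps)
    fix e :: real assume e: "0 < e"
    have "finite {Tmu \<psi> f} \<and> {Tmu \<psi> f} \<subseteq> Lmc \<and> 0 < e" using psiT e by simp
    from mp[OF spec[OF spec[OF spec[OF phiC, of 0], of "{Tmu \<psi> f}"], of e] this]
    obtain n where n: "cmod (Tmu \<psi> f (x n) - \<phi> (Tmu \<psi> f)) < e" by blast
    show "cmod (\<phi> (Tmu \<psi> f) - a) < \<delta> + e"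
      by (rule close_lemma[of "Tmu \<psi> f (x n)"]) (use n E1[of n] in \<open>simp_all add: Tmu_def\<close>)
  qed
  have E3: "cmod (\<phi> (Ltr (y k) f) - b) \<le> \<delta>" for k
  proof (rule le_by_eps)
    fix e :: real assume e: "0 < e"
    have "finite {Ltr (y k) f} \<and> {Ltr (y k) f} \<subseteq> Lmc \<and> 0 < e" using Ltr_Lmc[OF lc f] e by simp
    from mp[OF spec[OF spec[OF spec[OF phiC, of "Suc k"], of "{Ltr (y k) f}"], of e] this]
    obtain n where n: "n \<ge> Suc k" "cmod (Ltr (y k) f (x n) - \<phi> (Ltr (y k) f)) < e" by blast
    have c: "cmod (f (y k * x n) - b) < \<delta>" using spec[OF spec[OF xy, of k], of n] n(1) by simp
    show "cmod (\<phi> (Ltr (y k) f) - b) < \<delta> + e"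
      by (rule close_lemma[of "f (y k * x n)"]) (use n(2) c in \<open>simp_all add: Ltr_def\<close>)
  qed
  have E4: "cmod (\<psi> (Tmu \<phi> f) - b) \<le> \<delta>"
  proof (rule le_by_eps)
    fix e :: real assume e: "0 < e"
    have "finite {Tmu \<phi> f} \<and> {Tmu \<phi> f} \<subseteq> Lmc \<and> 0 < e" using phiT e by simp
    from mp[OF spec[OF spec[OF spec[OF psiC, of 0], of "{Tmu \<phi> f}"], of e] this]
    obtain n where n: "cmod (Tmu \<phi> f (y n) - \<psi> (Tmu \<phi> f)) < e" by blast
    show "cmod (\<psi> (Tmu \<phi> f) - b) < \<delta> + e"
      by (rule close_lemma[of "Tmu \<phi> f (y n)"]) (use n E3[of n] in \<open>simp_all add: Tmu_def\<close>)
  qed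
  have phiN: "\<phi> \<notin> range evl"
  proof
    assume "\<phi> \<in> range evl"
    then obtain s where s: "\<phi> = evl s" by auto
    have "\<phi> (Tmu \<psi> f) = \<psi> (Ltr s f)" unfolding s using psiT by (simp add: evl_def Tmu_def)
    moreover have "\<psi> (Tmu \<phi> f) = \<psi> (Ltr s f)" unfolding s using Tmu_evl[OF lc f] by simp
    ultimately have "cmod (a - b) \<le> 2 * \<delta>" using E2 E4 by (intro two_close) auto
    then show False using ab by simp
  qed
  have psiN: "\<psi> \<notin> range evl"
  proof
    assume "\<psi> \<in> range evl"
    then obtain t where t: "\<psi> = evl t" by auto
    have "\<psi> (Tmu \<phi> f) = \<phi> (Ltr t f)" unfolding t using phiT by (simp add: evl_def Tmu_def)
    moreover have "\<phi> (Tmu \<psi> f) = \<phi> (Ltr t f)" unfolding t using Tmu_evl[OF lc f] by simp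
    ultimately have "cmod (a - b) \<le> 2 * \<delta>" using E2 E4 by (intro two_close) auto
    then show False using ab by simp
  qed
  have "approx \<phi> (range x)" unfolding approx_def
  proof (intro allI impI)
    fix G :: "('a \<Rightarrow> complex) set" and e :: real
    assume G: "finite G \<and> G \<subseteq> Lmc \<and> 0 < e"
    from mp[OF spec[OF spec[OF spec[OF phiC, of 0], of G], of e] G]
    obtain n where "\<forall>g\<in>G. cmod (g (x n) - \<phi> g) < e" by blast
    then show "\<exists>a\<in>range x. \<forall>g\<in>G. cmod (g a - \<phi> g) < e" by blast
  qed
  then have "\<phi> \<in> lmc_closure (range x)" using approx_imp_closure[OF lc phiS] by blast
  then have ux: "unbounded_seq x" unfolding unbounded_seq_def unbounded_set_def Sstar_def using phiS phiN by blast
  have "approx \<psi> (range y)" unfolding approx_def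
  proof (intro allI impI)
    fix G :: "('a \<Rightarrow> complex) set" and e :: real
    assume G: "finite G \<and> G \<subseteq> Lmc \<and> 0 < e"
    from mp[OF spec[OF spec[OF spec[OF psiC, of 0], of G], of e] G]
    obtain n where "\<forall>g\<in>G. cmod (g (y n) - \<psi> g) < e" by blast
    then show "\<exists>a\<in>range y. \<forall>g\<in>G. cmod (g a - \<psi> g) < e" by blast
  qed
  then have "\<psi> \<in> lmc_closure (range y)" using approx_imp_closure[OF lc psiS] by blast
  then have uy: "unbounded_seq y" unfolding unbounded_seq_def unbounded_set_def Sstar_def using psiS psiN by blast
  show "\<exists>x y :: nat \<Rightarrow> 'a. unbounded_seq x \<and> unbounded_seq y \<and>
       lmc_closure {x k * y n | k n. k < n} \<inter> lmc_closure {y k * x n | k n. k < n} = {}"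
    using ux uy disj by blast
next
  have lc: "\<And>s::'a. continuous_on UNIV (\<lambda>x. s * x)" using assms(1) by blast
  assume "\<exists>x y :: nat \<Rightarrow> 'a. unbounded_seq x \<and> unbounded_seq y \<and>
       lmc_closure {x k * y n | k n. k < n} \<inter> lmc_closure {y k * x n | k n. k < n} = {}"
  then obtain x y :: "nat \<Rightarrow> 'a" where ux: "unbounded_seq x" and uy: "unbounded_seq y"
    and disj: "lmc_closure {x k * y n | k n. k < n} \<inter> lmc_closure {y k * x n | k n. k < n} = {}" by blast
  obtain \<mu> where mu: "\<mu> \<in> lmc_closure (range x)" "\<mu> \<in> SLmc" "\<mu> \<notin> range evl"
    using ux unfolding unbounded_seq_def unbounded_set_def Sstar_def by blast
  obtain \<nu> where nu: "\<nu> \<in> lmc_closure (range y)" "\<nu> \<in> SLmc" "\<nu> \<notin> range evl"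
    using uy unfolding unbounded_seq_def unbounded_set_def Sstar_def by blast
  have 1: "lmc_mult \<mu> \<nu> \<in> lmc_closure {x k * y n | k n. k < n}" by (rule prod_in_closure[OF lc mu(1) nu(1) nu(3)])
  have 2: "lmc_mult \<nu> \<mu> \<in> lmc_closure {y k * x n | k n. k < n}" by (rule prod_in_closure[OF lc nu(1) mu(1) mu(3)])
  show "\<not> SLmc_commutative TYPE('a)"
  proof
    assume "SLmc_commutative TYPE('a)"
    then have "lmc_mult \<mu> \<nu> = lmc_mult \<nu> \<mu>" unfolding SLmc_commutative_def using mu(2) nu(2) by blast
    then show False using 1 2 disj by auto
  qed
qed

end
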